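(* Let $0<q<1$ and define monic polynomials by $p_{-1}=0$, $p_0=1$, $p_{n+1}(x)=(x-b_n)p_n(x)-\lambda_np_{n-1}(x)$ with $$b_n=q^{n+1}[n+1]_q+q^{n-1}[n]_q,\qquad \lambda_n=q^{2n-1}[n]_q^2.$$ Let $\mu$ be the discrete probability measure on $\mathbb R$ with mass $q^{i}(q;q)_\infty/(q;q)_{i-1}$ at the point $q^{i-1}/(1-q)$ for each $i\ge1$, and mass $1-q$ at $0$. Then the $p_n$ are orthogonal with respect to $\mu$ (i.e. $\int p_mp_n\,d\mu=0$ for $m\ne n$), and the moments of $\mu$ are $\mu_0=1$ and $\mu_n=\int x^n\,d\mu=q\,[n]_q!$ for $n\ge1$.
   Context: $[n]_q=\frac{1-q^n}{1-q}$, $[n]_q!=[n]_q\cdots[1]_q$, $(q;q)_k=\prod_{j=1}^{k}(1-q^j)$ (with $(q;q)_0=1$) and $(q;q)_\infty=\prod_{j\ge1}(1-q^j)$. *)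

theory Defs
  imports "HOL-Probability.Probability" "HOL-Computational_Algebra.Polynomial"
begin

definition qint :: "real \<Rightarrow> nat \<Rightarrow> real" where
  "qint q n = (1 - q ^ n) / (1 - q)"

definition qfact :: "real \<Rightarrow> nat \<Rightarrow> real" where
  "qfact q n = (\<Prod>k=1..n. qint q k)"

definition qpoch :: "real \<Rightarrow> nat \<Rightarrow> real" where
  "qpoch q k = (\<Prod>j=1..k. (1 - q ^ j))"

definition qpoch_inf :: "real \<Rightarrow> real" where
  "qpoch_inf q = (\<Prod>j. (1 - q ^ Suc j))"

definition bcoef :: "real \<Rightarrow> nat \<Rightarrow> real" where
  "bcoef q n = q ^ (n + 1) * qint q (n + 1) + q ^ (n - 1) * qint q n"

(* lambda_n = q^(2n-1) [n]_q^2; at n = 0 the factor [0]_q = 0 makes the value 0 *)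
definition lcoef :: "real \<Rightarrow> nat \<Rightarrow> real" where
  "lcoef q n = q ^ (2 * n - 1) * (qint q n)\<^sup>2"

fun opoly :: "real \<Rightarrow> nat \<Rightarrow> real poly" where
  "opoly q 0 = 1"
| "opoly q (Suc 0) = [:- bcoef q 0, 1:]"
| "opoly q (Suc (Suc n)) =
     [:- bcoef q (Suc n), 1:] * opoly q (Suc n) - smult (lcoef q (Suc n)) (opoly q n)"

definition mu_weight :: "real \<Rightarrow> real \<Rightarrow> real" where
  "mu_weight q x =
     (if x = 0 then 1 - q
      else if (\<exists>i\<ge>1. x = q ^ (i - 1) / (1 - q))
      then (let i = (THE i. i \<ge> 1 \<and> x = q ^ (i - 1) / (1 - q))
            in q ^ i * qpoch_inf q / qpoch q (i - 1))
      else 0)"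

definition mu :: "real \<Rightarrow> real measure" where
  "mu q = density (count_space UNIV) (\<lambda>x. ennreal (mu_weight q x))"

end

theory Submission
  imports Defs
begin


definition Fq :: "real \<Rightarrow> nat \<Rightarrow> real" where
  "Fq q m = (\<Sum>i. q ^ (m * i) / qpoch q i)"

context fixes q :: real assumes q0: "0 < q" and q1: "q < 1"
begin

lemma qpoch_Suc: "qpoch q (Suc k) = qpoch q k * (1 - q ^ Suc k)"
  unfolding qpoch_def by (simp add: prod.nat_ivl_Suc')

lemma qpoch_pos: "qpoch q k > 0"
proof (induction k)
  case 0 then show ?case by (simp add: qpoch_def)
next
  case (Suc k)
  have "q ^ Suc k < 1" using q0 q1 by (rule power_Suc_less_one)
  then show ?case using Suc by (simp add: qpoch_Suc)
qed

lemma Fsummable: assumes "m \<ge> 1" shows "summable (\<lambda>i. q ^ (m * i) / qpoch q i)"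
proof -
  define c where "c = (1 + q) / 2"
  have c1: "c < 1" using q1 by (simp add: c_def)
  have "(1 - q) / (1 + q) > 0" using q0 q1 by simp
  then obtain N where N: "q ^ N < (1 - q) / (1 + q)" using real_arch_pow_inv q1 by blast
  show ?thesis
  proof (rule summable_ratio_test[OF c1])
    fix n assume "n \<ge> N"
    have qn: "q ^ Suc n \<le> q ^ N" using \<open>n \<ge> N\<close> q0 q1 by (intro power_decreasing) auto
    have qm: "q ^ m \<le> q" using assms q0 q1 by (metis power_decreasing power_one_right less_le_not_le nle_le)
    have lt: "q ^ Suc n < 1" using q0 q1 by (rule power_Suc_less_one)
    have key: "q ^ m \<le> c * (1 - q ^ Suc n)"
    proof -
      have "q ^ Suc n * (1 + q) < 1 - q" using qn N q0
        by (smt (verit, ccfv_SIG) mult_right_mono pos_less_divide_eq)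
      then have "q \<le> c * (1 - q ^ Suc n)" unfolding c_def by (simp add: algebra_simps)
      then show ?thesis using qm by linarith
    qed
    have "q ^ (m * Suc n) / qpoch q (Suc n) = (q ^ (m * n) / qpoch q n) * (q ^ m / (1 - q ^ Suc n))"
      by (simp add: qpoch_Suc power_add mult.commute)
    moreover have "q ^ m / (1 - q ^ Suc n) \<le> c" using key lt by (simp add: divide_le_eq)
    moreover have "q ^ (m * n) / qpoch q n \<ge> 0" using qpoch_pos[of n] q0 by (intro divide_nonneg_nonneg) auto
    ultimately have "q ^ (m * Suc n) / qpoch q (Suc n) \<le> c * (q ^ (m * n) / qpoch q n)"
      by (metis mult.commute mult_left_mono)
    then show "norm (q ^ (m * Suc n) / qpoch q (Suc n)) \<le> c * norm (q ^ (m * n) / qpoch q n)"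
      using qpoch_pos[of n] qpoch_pos[of "Suc n"] q0 by (simp add: abs_of_nonneg)
  qed
qed


lemma F_step: assumes "m \<ge> 1" shows "Fq q (Suc m) = (1 - q ^ m) * Fq q m"
proof -
  define a where "a = (\<lambda>i. q ^ (m * i) / qpoch q i)"
  have sa: "summable a" unfolding a_def using Fsummable[OF assms] .
  have sb: "summable (\<lambda>i. q ^ (Suc m * i) / qpoch q i)" using Fsummable[of "Suc m"] by simp
  have eq: "a i - q ^ (Suc m * i) / qpoch q i = a i * (1 - q ^ i)" for i
    using qpoch_pos[of i] unfolding a_def by (simp add: power_add power_mult field_simps)
  have s0: "(\<lambda>i. a i * (1 - q ^ i)) sums (suminf a - (\<Sum>i. q ^ (Suc m * i) / qpoch q i))"
    using sums_diff[OF summable_sums[OF sa] summable_sums[OF sb]] by (simp only: eq)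
  have Fa: "Fq q m = suminf a" by (simp add: Fq_def a_def)
  have s1: "(\<lambda>i. a i * (1 - q ^ i)) sums (Fq q m - Fq q (Suc m))"
    using s0 unfolding Fa by (simp only: Fq_def)
  have "a (Suc j) * (1 - q ^ Suc j) = q ^ m * a j" for j
    unfolding a_def using qpoch_pos[of j] power_Suc_less_one[OF q0 q1, of j]
    by (simp add: qpoch_Suc power_add field_simps)
  moreover have "(\<lambda>j. a (Suc j) * (1 - q ^ Suc j)) sums (Fq q m - Fq q (Suc m))"
    using s1 by (subst sums_Suc_iff) simp
  ultimately have "(\<lambda>j. q ^ m * a j) sums (Fq q m - Fq q (Suc m))" by simp
  moreover have "(\<lambda>j. q ^ m * a j) sums (q ^ m * Fq q m)"
    unfolding Fa using sums_mult[OF summable_sums[OF sa]] by simp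
  ultimately have "Fq q m - Fq q (Suc m) = q ^ m * Fq q m" using sums_unique2 by blast
  then show ?thesis by (simp add: algebra_simps)
qed

lemma F_prod: "Fq q (Suc k) = Fq q 1 * qpoch q k"
proof (induction k)
  case 0 then show ?case by (simp add: qpoch_def)
next
  case (Suc k) then show ?case using F_step[of "Suc k"] by (simp add: qpoch_Suc)
qed

lemma F_bounds: "1 \<le> Fq q (Suc m) \<and> Fq q (Suc m) \<le> 1 + q ^ m * Fq q 1"
proof
  have s: "summable (\<lambda>i. q ^ (Suc m * i) / qpoch q i)" using Fsummable[of "Suc m"] by simp
  have s1: "summable (\<lambda>i. q ^ i / qpoch q i)" using Fsummable[of 1] by simp
  have nn: "0 \<le> q ^ (Suc m * i) / qpoch q i" for i using qpoch_pos[of i] q0 by (intro divide_nonneg_nonneg) auto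
  have "(\<Sum>i\<in>{0}. q ^ (Suc m * i) / qpoch q i) \<le> Fq q (Suc m)"
    unfolding Fq_def by (rule sum_le_suminf[OF s]) (use nn in auto)
  then show "1 \<le> Fq q (Suc m)" by (simp add: qpoch_def)
  have le: "q ^ (Suc m * i) / qpoch q i \<le> (if i = 0 then 1 else 0) + q ^ m * (q ^ i / qpoch q i)" for i
  proof (cases i)
    case 0 then show ?thesis using q0 by (simp add: qpoch_def)
  next
    case (Suc j)
    have "m + i \<le> Suc m * i" using Suc by simp
    then have "q ^ (Suc m * i) \<le> q ^ (m + i)" using q0 q1 by (intro power_decreasing) auto
    then have "q ^ (Suc m * i) / qpoch q i \<le> q ^ (m + i) / qpoch q i"
      using qpoch_pos[of i] by (intro divide_right_mono) auto
    then show ?thesis using Suc by (simp add: power_add mult_ac)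
  qed
  have s2: "summable (\<lambda>i. (if i = 0 then 1 else 0) + q ^ m * (q ^ i / qpoch q i))"
    by (intro summable_add summable_mult s1) simp
  have "Fq q (Suc m) \<le> (\<Sum>i. (if i = 0 then 1 else 0) + q ^ m * (q ^ i / qpoch q i))"
    unfolding Fq_def by (rule suminf_le[OF le s s2])
  also have "\<dots> = (\<Sum>i. (if i = 0 then 1 else 0::real)) + q ^ m * Fq q 1"
  proof -
    have sI: "summable (\<lambda>i. if i = 0 then 1 else (0::real))" by simp
    have sM: "summable (\<lambda>i. q ^ m * (q ^ i / qpoch q i))" by (rule summable_mult[OF s1])
    have "(\<Sum>i. (if i = 0 then 1 else 0) + q ^ m * (q ^ i / qpoch q i)) =
      (\<Sum>i. (if i = 0 then 1 else 0::real)) + (\<Sum>i. q ^ m * (q ^ i / qpoch q i))"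
      by (rule suminf_add[OF sI sM, symmetric])
    moreover have "(\<Sum>i. q ^ m * (q ^ i / qpoch q i)) = q ^ m * Fq q 1"
      using suminf_mult[OF s1, of "q ^ m"] by (simp add: Fq_def)
    ultimately show ?thesis by simp
  qed
  also have "(\<Sum>i. (if i = 0 then 1 else 0::real)) = 1"
    using suminf_finite[of "{0}" "\<lambda>i. if i = 0 then 1 else (0::real)"] by simp
  finally show "Fq q (Suc m) \<le> 1 + q ^ m * Fq q 1" .
qed

lemma F_lim: "(\<lambda>m. Fq q (Suc m)) \<longlonglongrightarrow> 1"
proof (rule tendsto_sandwich[of "\<lambda>_. 1" _ _ "\<lambda>m. 1 + q ^ m * Fq q 1"])
  show "\<forall>\<^sub>F n in sequentially. 1 \<le> Fq q (Suc n)" using F_bounds by simp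
  show "\<forall>\<^sub>F n in sequentially. Fq q (Suc n) \<le> 1 + q ^ n * Fq q 1" using F_bounds by simp
  have "(\<lambda>m. q ^ m) \<longlonglongrightarrow> 0" using q0 q1 by (intro LIMSEQ_power_zero) auto
  then have "(\<lambda>m. q ^ m * Fq q 1) \<longlonglongrightarrow> 0 * Fq q 1" by (intro tendsto_mult tendsto_const)
  then have "(\<lambda>m. 1 + q ^ m * Fq q 1) \<longlonglongrightarrow> 1 + 0 * Fq q 1" by (intro tendsto_add tendsto_const)
  then show "(\<lambda>m. 1 + q ^ m * Fq q 1) \<longlonglongrightarrow> 1" by simp
qed simp

lemma qpoch_lim: "(\<lambda>k. qpoch q k) \<longlonglongrightarrow> qpoch_inf q"
proof -
  have "summable (\<lambda>i. q * q ^ i)" using q0 q1 by (intro summable_mult summable_geometric) simp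
  moreover have "norm ((1 - q ^ Suc i) - 1) = q * q ^ i" for i using q0 by simp
  ultimately have "summable (\<lambda>i. norm ((1 - q ^ Suc i) - 1))" by simp
  then have "convergent_prod (\<lambda>i. 1 - q ^ Suc i)"
    by (intro abs_convergent_prod_imp_convergent_prod summable_imp_abs_convergent_prod)
  from convergent_prod_LIMSEQ[OF this]
  have "(\<lambda>n. \<Prod>i\<le>n. 1 - q ^ Suc i) \<longlonglongrightarrow> qpoch_inf q" unfolding qpoch_inf_def .
  moreover have "(\<Prod>i\<le>n. 1 - q ^ Suc i) = qpoch q (Suc n)" for n
    unfolding qpoch_def by (induction n) (simp_all add: prod.nat_ivl_Suc' atMost_Suc)
  ultimately have "(\<lambda>n. qpoch q (Suc n)) \<longlonglongrightarrow> qpoch_inf q" by simp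
  then show ?thesis by (rule LIMSEQ_imp_Suc)
qed

lemma F1_Q: "Fq q 1 * qpoch_inf q = 1"
proof -
  have "(\<lambda>k. Fq q (Suc k)) \<longlonglongrightarrow> Fq q 1 * qpoch_inf q"
    unfolding F_prod by (intro tendsto_mult tendsto_const qpoch_lim)
  then show ?thesis using F_lim LIMSEQ_unique by blast
qed

lemma Q_pos: "qpoch_inf q > 0"
proof -
  have "Fq q 1 \<ge> 1" using F_bounds[of 0] by simp
  then show ?thesis using F1_Q by (smt (verit) mult_nonneg_nonpos)
qed


lemma qpow_inj: "q ^ a = q ^ b \<Longrightarrow> a = b"
  using power_strict_decreasing_iff[OF q0 q1, of a b] power_strict_decreasing_iff[OF q0 q1, of b a]
  by (metis less_irrefl linorder_neqE_nat)

lemma mw0: "mu_weight q 0 = 1 - q"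
  by (simp add: mu_weight_def)

lemma mwx: "mu_weight q (q ^ i / (1 - q)) = q ^ Suc i * qpoch_inf q / qpoch q i"
proof -
  have ne: "q ^ i / (1 - q) \<noteq> 0" using q0 q1 by simp
  have ex: "\<exists>j\<ge>1. q ^ i / (1 - q) = q ^ (j - 1) / (1 - q)" by (intro exI[of _ "Suc i"]) simp
  have th: "(THE j. j \<ge> 1 \<and> q ^ i / (1 - q) = q ^ (j - 1) / (1 - q)) = Suc i"
  proof (rule the_equality)
    fix j assume "1 \<le> j \<and> q ^ i / (1 - q) = q ^ (j - 1) / (1 - q)"
    then have "1 \<le> j" "q ^ i = q ^ (j - 1)" using q1 by auto
    then show "j = Suc i" using qpow_inj by fastforce
  qed simp
  show ?thesis unfolding mu_weight_def using ne ex th by (simp add: Let_def)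
qed

lemma mwo: assumes "x \<notin> insert 0 (range (\<lambda>i. q ^ i / (1 - q)))" shows "mu_weight q x = 0"
proof -
  have nex: "(\<exists>j\<ge>1. x = q ^ (j - 1) / (1 - q)) = False"
  proof -
    have "\<not> (\<exists>j\<ge>1. x = q ^ (j - 1) / (1 - q))"
    proof
      assume "\<exists>j\<ge>1. x = q ^ (j - 1) / (1 - q)"
      then obtain j where "x = q ^ (j - 1) / (1 - q)" by blast
      then show False using assms by auto
    qed
    then show ?thesis by simp
  qed
  have ne: "(x = 0) = False" using assms by auto
  show ?thesis by (subst mu_weight_def) (simp only: ne nex if_False)
qed

lemma mw_nonneg: "mu_weight q x \<ge> 0"
proof (cases "x \<in> insert 0 (range (\<lambda>i. q ^ i / (1 - q)))")
  case True
  then show ?thesis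
  proof
    assume "x = 0" then show ?thesis using q1 by (simp add: mw0)
  next
    assume "x \<in> range (\<lambda>i. q ^ i / (1 - q))"
    then obtain i where "x = q ^ i / (1 - q)" by auto
    then show ?thesis using Q_pos qpoch_pos[of i] q0 by (simp add: mwx)
  qed
qed (simp add: mwo)

lemma xp_inj: "inj (\<lambda>i. q ^ i / (1 - q))"
  by (rule injI) (use q1 qpow_inj in auto)

lemma count_int:
  fixes g :: "real \<Rightarrow> real"
  assumes sm: "summable (\<lambda>i. \<bar>q ^ Suc i * qpoch_inf q / qpoch q i * g (q ^ i / (1 - q))\<bar>)"
  shows "integrable (count_space UNIV) (\<lambda>x. mu_weight q x * g x)"
    and "integral\<^sup>L (count_space UNIV) (\<lambda>x. mu_weight q x * g x)
          = (1 - q) * g 0 + (\<Sum>i. q ^ Suc i * qpoch_inf q / qpoch q i * g (q ^ i / (1 - q)))"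
proof -
  define h where "h = (\<lambda>x. mu_weight q x * g x)"
  define xp where "xp = (\<lambda>i::nat. q ^ i / (1 - q))"
  define S where "S = insert 0 (range xp)"
  have hxp: "h (xp i) = q ^ Suc i * qpoch_inf q / qpoch q i * g (xp i)" for i
    by (simp add: h_def xp_def mwx)
  have hout: "x \<notin> S \<Longrightarrow> h x = 0" for x by (simp add: h_def S_def xp_def mwo)
  have inj: "inj xp" using xp_inj unfolding xp_def .
  have 0: "0 \<notin> range xp" using q0 q1 by (auto simp: xp_def)
  have a1: "Infinite_Set_Sum.abs_summable_on (\<lambda>i. h (xp i)) UNIV"
    unfolding abs_summable_on_nat_iff' real_norm_def hxp unfolding xp_def using sm .
  then have a2: "Infinite_Set_Sum.abs_summable_on h (range xp)"
    using abs_summable_on_reindex_iff[OF inj_on_subset[OF inj subset_UNIV], of h] by simp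
  then have a3: "Infinite_Set_Sum.abs_summable_on h S" by (simp add: S_def)
  have a4: "Infinite_Set_Sum.abs_summable_on h UNIV"
    using a3 by (subst abs_summable_on_cong_neutral[of UNIV S h h]) (auto simp: hout)
  then show "integrable (count_space UNIV) (\<lambda>x. mu_weight q x * g x)"
    by (simp add: Infinite_Set_Sum.abs_summable_on_def h_def)
  have "integral\<^sup>L (count_space UNIV) h = infsetsum h UNIV" by (simp add: infsetsum_def)
  also have "\<dots> = infsetsum h S" by (rule infsetsum_cong_neutral) (auto simp: hout)
  also have "\<dots> = infsetsum h ({0} \<union> range xp)" by (simp add: S_def)
  also have "\<dots> = infsetsum h {0} + infsetsum h (range xp)"
    by (rule infsetsum_Un_disjoint) (use a2 0 in auto)
  also have "infsetsum h (range xp) = infsetsum (\<lambda>i. h (xp i)) UNIV"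
    by (rule infsetsum_reindex[OF inj_on_subset[OF inj subset_UNIV]])
  also have "\<dots> = (\<Sum>i. h (xp i))" by (rule infsetsum_nat'[OF a1])
  finally show "integral\<^sup>L (count_space UNIV) (\<lambda>x. mu_weight q x * g x)
          = (1 - q) * g 0 + (\<Sum>i. q ^ Suc i * qpoch_inf q / qpoch q i * g (q ^ i / (1 - q)))"
    by (simp add: h_def mw0 mwx xp_def)
qed


lemma qfact_eq: "qfact q k = qpoch q k / (1 - q) ^ k"
proof (induction k)
  case 0 then show ?case by (simp add: qfact_def qpoch_def)
next
  case (Suc k)
  have "qfact q (Suc k) = qfact q k * qint q (Suc k)" unfolding qfact_def by (simp add: prod.nat_ivl_Suc')
  then show ?case using Suc q1 by (simp add: qpoch_Suc qint_def field_simps)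
qed

lemma mom_sum:
  shows "summable (\<lambda>i. \<bar>q ^ Suc i * qpoch_inf q / qpoch q i * (q ^ i / (1 - q)) ^ k\<bar>)"
    and "(\<Sum>i. q ^ Suc i * qpoch_inf q / qpoch q i * (q ^ i / (1 - q)) ^ k) = q * qfact q k"
proof -
  define K where "K = q * qpoch_inf q / (1 - q) ^ k"
  have eq: "q ^ Suc i * qpoch_inf q / qpoch q i * (q ^ i / (1 - q)) ^ k = K * (q ^ (Suc k * i) / qpoch q i)" for i
    unfolding K_def by (simp add: power_divide power_add power_mult field_simps mult.commute[of k])
  have sm: "summable (\<lambda>i. q ^ (Suc k * i) / qpoch q i)" using Fsummable[of "Suc k"] by simp
  have "K \<ge> 0" unfolding K_def using q0 q1 Q_pos by simp
  moreover have "q ^ (Suc k * i) / qpoch q i \<ge> 0" for i using q0 qpoch_pos[of i] by simp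
  ultimately have ab: "\<bar>K * (q ^ (Suc k * i) / qpoch q i)\<bar> = K * (q ^ (Suc k * i) / qpoch q i)" for i
    by (intro abs_of_nonneg mult_nonneg_nonneg) auto
  show "summable (\<lambda>i. \<bar>q ^ Suc i * qpoch_inf q / qpoch q i * (q ^ i / (1 - q)) ^ k\<bar>)"
    unfolding eq ab by (intro summable_mult sm)
  have "(\<Sum>i. q ^ Suc i * qpoch_inf q / qpoch q i * (q ^ i / (1 - q)) ^ k) = K * Fq q (Suc k)"
    unfolding eq Fq_def by (rule suminf_mult[OF sm])
  also have "\<dots> = q * qfact q k" unfolding F_prod K_def qfact_eq
    using F1_Q by (simp add: field_simps)
  finally show "(\<Sum>i. q ^ Suc i * qpoch_inf q / qpoch q i * (q ^ i / (1 - q)) ^ k) = q * qfact q k" .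
qed

lemma mu_int_power:
  shows "integrable (mu q) (\<lambda>x. x ^ k)"
    and "(\<integral>x. x ^ k \<partial>mu q) = (1 - q) * 0 ^ k + q * qfact q k"
proof -
  note ci = count_int[of "\<lambda>x. x ^ k", OF mom_sum(1)]
  have nn: "AE x in count_space UNIV. 0 \<le> mu_weight q x" using mw_nonneg by simp
  show "integrable (mu q) (\<lambda>x. x ^ k)"
    unfolding mu_def using ci(1) by (subst integrable_density) (use nn in auto)
  show "(\<integral>x. x ^ k \<partial>mu q) = (1 - q) * 0 ^ k + q * qfact q k"
    unfolding mu_def using ci(2) mom_sum(2) by (subst integral_density) (use nn in auto)
qed

lemma mu_prob: "prob_space (mu q)"
proof
  note ci0 = count_int[of "\<lambda>x. x ^ 0", OF mom_sum(1)[of 0]]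
  have ci: "integrable (count_space UNIV) (mu_weight q)"
     "integral\<^sup>L (count_space UNIV) (mu_weight q) = (1 - q) + (\<Sum>i. q ^ Suc i * qpoch_inf q / qpoch q i * (q ^ i / (1 - q)) ^ 0)"
    using ci0 by simp_all
  have nn: "AE x in count_space UNIV. 0 \<le> mu_weight q x" using mw_nonneg by simp
  have "emeasure (mu q) (space (mu q)) = (\<integral>\<^sup>+ x. ennreal (mu_weight q x) \<partial>count_space UNIV)"
    unfolding mu_def by (subst emeasure_density) auto
  also have "\<dots> = ennreal (integral\<^sup>L (count_space UNIV) (mu_weight q))"
    using ci(1) nn by (intro nn_integral_eq_integral) auto
  also have "integral\<^sup>L (count_space UNIV) (mu_weight q) = 1"
    using ci(2) mom_sum(2)[of 0] by (simp add: qfact_def)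
  finally show "emeasure (mu q) (space (mu q)) = 1" by simp
qed

end


definition Cq :: "real \<Rightarrow> nat \<Rightarrow> real" where "Cq q n = (\<Prod>j=1..n. q ^ j / (1 - q))"
definition Rq :: "real \<Rightarrow> nat \<Rightarrow> nat \<Rightarrow> real" where "Rq q n k = (\<Prod>j\<in>{1..<n}. q ^ j - q ^ k)"
definition Gf :: "real \<Rightarrow> nat \<Rightarrow> nat \<Rightarrow> real" where
  "Gf q n k = (if n = 0 then q * qfact q k
     else qfact q k * Cq q n * (1 - q ^ n + q ^ (n + 1) - q ^ (k + 1)) * Rq q n k)"

lemma Cq_Suc: "Cq q (Suc n) = Cq q n * (q ^ Suc n / (1 - q))"
  unfolding Cq_def by (simp add: prod.nat_ivl_Suc')

lemma Rq_Suc: "n \<ge> 1 \<Longrightarrow> Rq q (Suc n) k = Rq q n k * (q ^ n - q ^ k)"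
  unfolding Rq_def by (simp add: prod.atLeastLessThan_Suc)

lemma Rq_shift: "n \<ge> 1 \<Longrightarrow> Rq q (Suc n) (Suc k) = q ^ n * (1 - q ^ k) * Rq q n k"
proof (induction n)
  case 0 then show ?case by simp
next
  case (Suc n)
  show ?case
  proof (cases "n = 0")
    case True then show ?thesis by (simp add: Rq_def algebra_simps)
  next
    case False
    then have n1: "n \<ge> 1" by simp
    have "Rq q (Suc (Suc n)) (Suc k) = Rq q (Suc n) (Suc k) * (q ^ Suc n - q ^ Suc k)"
      by (rule Rq_Suc) simp
    also have "\<dots> = q ^ n * (1 - q ^ k) * Rq q n k * (q * (q ^ n - q ^ k))"
      by (simp only: Suc.IH[OF n1]) (simp add: algebra_simps)
    also have "\<dots> = q ^ Suc n * (1 - q ^ k) * Rq q (Suc n) k"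
      by (simp only: Rq_Suc[OF n1, of q k]) (simp add: algebra_simps)
    finally show ?thesis .
  qed
qed

lemma qfact_Suc: "qfact q (Suc k) = qfact q k * ((1 - q ^ Suc k) / (1 - q))"
  unfolding qfact_def qint_def by (simp add: prod.nat_ivl_Suc')

lemma key_id:
  fixes q a c u :: real
  shows "(a*q*u) * (a*q*q*u) * (1 - a*q*q + a*q*q*q - q*c) * ((a-c) * (a*q - c))
    = ((1-q*c)*u) * (a*q*u) * (1 - a*q + a*q*q - q*q*c) * (a*(1-c))
    - (a*q*q*((1-a*q*q)*u) + a*((1-a*q)*u)) * ((a*q*u) * (1 - a*q+a*q*q - q*c) * (a-c))
    - (a*a*q*((1-a*q)*u)^2) * (1 - a + a*q - q*c)"
  by algebra


lemma key_id0:
  fixes q c u :: real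
  assumes "u * (1 - q) = 1"
  shows "(q*u) * (q*q*u) * (1 - q*q + q*q*q - q*c) * (q - c)
    = ((1-q*c)*u) * (q*u) * (1 - q + q*q - q*q*c)
    - (q*q*((1-q*q)*u) + ((1-q)*u)) * ((q*u) * (1 - q + q*q - q*c))
    - (q*((1-q)*u)^2) * q"
proof -
  have e: "q * ((1-q)*u)^2 * q = (q*u)*(q*u) * (1-q)^2" by (simp add: algebra_simps power2_eq_square)
  have "(q*u) * (q*q*u) * (1 - q*q + q*q*q - q*c) * (q - c)
    = ((1-q*c)*u) * (q*u) * (1 - q + q*q - q*q*c)
    - (q*q*((1-q*q)*u) + ((1-q)*u)) * ((q*u) * (1 - q + q*q - q*c))
    - (q*u)*(q*u) * (1-q)^2"
    by (simp add: algebra_simps power2_eq_square)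
  then show ?thesis by (simp only: e)
qed
lemma gen_comb:
  fixes Z E1 E2 E3 E4 B L :: real
  assumes "E1 = E2 - B * E3 - L * E4" shows "Z * E1 = Z * E2 - B * (Z * E3) - L * (Z * E4)"
proof -
  have "Z * E1 = Z * (E2 - B * E3 - L * E4)" using assms by simp
  then show ?thesis by (simp add: algebra_simps)
qed

lemma G_rec:
  fixes q :: real assumes q1: "q < 1"
  shows "Gf q (Suc (Suc n)) k = Gf q (Suc n) (Suc k) - bcoef q (Suc n) * Gf q (Suc n) k
          - lcoef q (Suc n) * Gf q n k"
proof (cases "n = 0")
  case True
  define c where "c = q ^ k"
  define u where "u = inverse (1 - q)"
  define X where "X = qfact q k"
  have u1: "u * (1 - q) = 1" using q1 by (simp add: u_def)
  have C1: "Cq q (Suc 0) = q * u" by (simp add: Cq_def u_def divide_inverse)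
  have C2: "Cq q (Suc (Suc 0)) = (q*u) * (q*q*u)" using Cq_Suc[of q "Suc 0"] C1 by (simp add: u_def divide_inverse power2_eq_square numeral_2_eq_2)
  have R1: "Rq q (Suc 0) k' = 1" for k' by (simp add: Rq_def)
  have R2: "Rq q (Suc (Suc 0)) k = q - c" by (simp add: Rq_def c_def numeral_2_eq_2)
  have F1: "qfact q (Suc k) = X * ((1 - q * c) * u)" by (simp add: qfact_Suc X_def c_def u_def divide_inverse)
  have g2: "Gf q (Suc (Suc 0)) k = X * ((q*u) * (q*q*u) * (1 - q*q + q*q*q - q*c) * (q - c))"
    by (simp add: Gf_def C2 R2 X_def c_def mult_ac power3_eq_cube power2_eq_square)
  have g1s: "Gf q 1 (Suc k) = X * (((1-q*c)*u) * (q*u) * (1 - q + q*q - q*q*c))"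
    by (simp add: Gf_def C1 R1 F1 c_def mult_ac power2_eq_square)
  have g1: "Gf q 1 k = X * ((q*u) * (1 - q + q*q - q*c))"
    by (simp add: Gf_def C1 R1 X_def c_def mult_ac power2_eq_square)
  have g0: "Gf q 0 k = X * q" by (simp add: Gf_def X_def)
  have b: "bcoef q 1 = q*q*((1-q*q)*u) + ((1-q)*u)"
    by (simp add: bcoef_def qint_def u_def divide_inverse power2_eq_square)
  have l: "lcoef q 1 = q*((1-q)*u)^2" by (simp add: lcoef_def qint_def u_def divide_inverse)
  show ?thesis using True gen_comb[OF key_id0[OF u1, of c], of X]
    by (simp add: g2[simplified] g1s[simplified] g1[simplified] g0 b[simplified] l[simplified] numeral_2_eq_2)
next
  case False
  then have n1: "n \<ge> 1" by simp
  define a where "a = q ^ n"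
  define c where "c = q ^ k"
  define u where "u = inverse (1 - q)"
  define X where "X = qfact q k"
  define Y where "Y = Cq q n"
  define W where "W = Rq q n k"
  have C1: "Cq q (Suc n) = Y * (a*q*u)" by (simp add: Cq_Suc Y_def a_def u_def divide_inverse mult_ac)
  have C2: "Cq q (Suc (Suc n)) = Y * (a*q*u) * (a*q*q*u)"
    using C1 by (simp add: Cq_Suc a_def u_def divide_inverse mult_ac)
  have R1: "Rq q (Suc n) k = W * (a - c)" by (simp add: Rq_Suc[OF n1] W_def a_def c_def)
  have R2: "Rq q (Suc (Suc n)) k = W * ((a - c) * (a*q - c))"
    using R1 Rq_Suc[of "Suc n" q k] by (simp add: a_def c_def mult_ac)
  have R1s: "Rq q (Suc n) (Suc k) = a * (1 - c) * W" by (simp add: Rq_shift[OF n1] a_def c_def W_def)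
  have F1: "qfact q (Suc k) = X * ((1 - q * c) * u)" by (simp add: qfact_Suc X_def c_def u_def divide_inverse)
  have g2: "Gf q (Suc (Suc n)) k = X * Y * W * ((a*q*u) * (a*q*q*u) * (1 - a*q*q + a*q*q*q - q*c) * ((a-c) * (a*q - c)))"
    by (simp add: Gf_def C2 R2 X_def a_def c_def mult_ac)
  have g1s: "Gf q (Suc n) (Suc k) = X * Y * W * (((1-q*c)*u) * (a*q*u) * (1 - a*q + a*q*q - q*q*c) * (a*(1-c)))"
    by (simp add: Gf_def C1 R1s F1 a_def c_def mult_ac)
  have g1: "Gf q (Suc n) k = X * Y * W * ((a*q*u) * (1 - a*q+a*q*q - q*c) * (a-c))"
    by (simp add: Gf_def C1 R1 X_def a_def c_def mult_ac)
  have g0: "Gf q n k = X * Y * W * (1 - a + a*q - q*c)"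
    using n1 by (simp add: Gf_def X_def Y_def W_def a_def c_def mult_ac)
  have b: "bcoef q (Suc n) = a*q*q*((1-a*q*q)*u) + a*((1-a*q)*u)"
    by (simp add: bcoef_def qint_def a_def u_def divide_inverse mult_ac)
  have l: "lcoef q (Suc n) = a*a*q*((1-a*q)*u)^2"
  proof -
    have "2 * Suc n - 1 = Suc (n + n)" by simp
    then show ?thesis by (simp add: lcoef_def qint_def a_def u_def divide_inverse power_add mult_ac power_mult power2_eq_square)
  qed
  show ?thesis unfolding g2 g1s g1 g0 b l
    by (rule gen_comb[OF key_id])
qed



context fixes q :: real assumes q0: "0 < q" and q1: "q < 1"
begin

lemma int_poly: "integrable (mu q) (\<lambda>x. poly p x)"
proof -
  have "(\<lambda>x. poly p x) = (\<lambda>x. \<Sum>i\<le>degree p. coeff p i * x ^ i)" by (simp add: poly_altdef fun_eq_iff)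
  moreover have "integrable (mu q) (\<lambda>x. \<Sum>i\<le>degree p. coeff p i * x ^ i)"
    by (intro Bochner_Integration.integrable_sum integrable_mult_right mu_int_power(1)[OF q0 q1])
  ultimately show ?thesis by simp
qed

lemma int_xpoly: "integrable (mu q) (\<lambda>x. x ^ k * poly p x)"
proof -
  have "(\<lambda>x. poly (monom 1 k * p) x) = (\<lambda>x. x ^ k * poly p x)" by (simp add: fun_eq_iff poly_monom)
  moreover have "integrable (mu q) (\<lambda>x. poly (monom 1 k * p) x)" by (rule int_poly)
  ultimately show ?thesis by simp
qed

lemma poly0: "poly (opoly q n) 0 = (\<Prod>j=1..n. - (q ^ j * qint q j))"
proof (induction n rule: nat_less_induct)
  case (1 n)
  show ?case
  proof (cases n)
    case 0 then show ?thesis by simp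
  next
    case (Suc m)
    show ?thesis
    proof (cases m)
      case 0 then show ?thesis using Suc by (simp add: bcoef_def qint_def)
    next
      case (Suc r)
      have IH1: "poly (opoly q (Suc r)) 0 = (\<Prod>j=1..Suc r. - (q ^ j * qint q j))"
        using 1 Suc \<open>n = Suc m\<close> by simp
      have IH0: "poly (opoly q r) 0 = (\<Prod>j=1..r. - (q ^ j * qint q j))"
        using 1 Suc \<open>n = Suc m\<close> by simp
      define P where "P = (\<Prod>j=1..r. - (q ^ j * qint q j))"
      have P1: "(\<Prod>j=1..Suc r. - (q ^ j * qint q j)) = P * (- (q ^ Suc r * qint q (Suc r)))"
        unfolding P_def by (simp add: prod.nat_ivl_Suc')
      have P2: "(\<Prod>j=1..Suc (Suc r). - (q ^ j * qint q j)) = P * (- (q ^ Suc r * qint q (Suc r))) * (- (q ^ Suc (Suc r) * qint q (Suc (Suc r))))"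
        unfolding P_def by (simp add: prod.nat_ivl_Suc')
      have b: "bcoef q (Suc r) = q ^ Suc (Suc r) * qint q (Suc (Suc r)) + q ^ r * qint q (Suc r)"
        by (simp add: bcoef_def)
      have l: "lcoef q (Suc r) = q ^ r * q ^ Suc r * (qint q (Suc r))\<^sup>2"
      proof -
        have "2 * Suc r - 1 = r + Suc r" by simp
        then show ?thesis by (simp add: lcoef_def power_add mult_2)
      qed
      have IH0': "poly (opoly q r) 0 = P" using IH0 by (simp add: P_def)
      have IH1': "poly (opoly q (Suc r)) 0 = P * (- (q ^ Suc r * qint q (Suc r)))" using IH1 P1 by simp
      have "poly (opoly q n) 0 = - bcoef q (Suc r) * poly (opoly q (Suc r)) 0 - lcoef q (Suc r) * poly (opoly q r) 0"
        using \<open>n = Suc m\<close> Suc by simp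
      also have "\<dots> = P * (- (q ^ Suc r * qint q (Suc r))) * (- (q ^ Suc (Suc r) * qint q (Suc (Suc r))))"
        unfolding IH0' IH1' b l by (simp add: algebra_simps power2_eq_square)
      also have "\<dots> = (\<Prod>j=1..n. - (q ^ j * qint q j))"
        by (simp only: \<open>n = Suc m\<close> Suc P2)
      finally show ?thesis .
    qed
  qed
qed

lemma deg_opoly: "degree (opoly q n) \<le> n"
proof (induction n rule: nat_less_induct)
  case (1 n)
  show ?case
  proof (cases n)
    case 0 then show ?thesis by simp
  next
    case (Suc m)
    show ?thesis
    proof (cases m)
      case 0 then show ?thesis using Suc by simp
    next
      case (Suc r)
      have d1: "degree (opoly q (Suc r)) \<le> Suc r" using 1 Suc \<open>n = Suc m\<close> by simp
      have d0: "degree (opoly q r) \<le> r" using 1 Suc \<open>n = Suc m\<close> by simp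
      have "degree ([:- bcoef q (Suc r), 1:] * opoly q (Suc r)) \<le> 1 + Suc r"
        using degree_mult_le[of "[:- bcoef q (Suc r), 1:]" "opoly q (Suc r)"] d1 by simp
      moreover have "degree (smult (lcoef q (Suc r)) (opoly q r)) \<le> Suc (Suc r)"
        using d0 degree_smult_le[of "lcoef q (Suc r)" "opoly q r"] by simp
      ultimately have "degree ([:- bcoef q (Suc r), 1:] * opoly q (Suc r) - smult (lcoef q (Suc r)) (opoly q r)) \<le> Suc (Suc r)"
        by (intro degree_diff_le) auto
      then show ?thesis using \<open>n = Suc m\<close> Suc by simp
    qed
  qed
qed

definition "Tq n k = (\<integral>x. x ^ k * poly (opoly q n) x \<partial>mu q)"

lemma T_formula:
  "Tq n k = Gf q n k + (if k = 0 then (1 - q) * poly (opoly q n) 0 else 0)"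
proof (induction n arbitrary: k rule: nat_less_induct)
  case (1 n)
  show ?case
  proof (cases n)
    case 0
    then show ?thesis using mu_int_power(2)[OF q0 q1, of k] by (simp add: Tq_def Gf_def)
  next
    case (Suc m)
    show ?thesis
    proof (cases m)
      case 0
      have "q \<noteq> 1" using \<open>q < 1\<close> by linarith
      then have b0: "bcoef q 0 = q" by (simp add: bcoef_def qint_def)
      have e: "(\<lambda>x. x ^ k * poly (opoly q n) x) = (\<lambda>x. x ^ Suc k - q * x ^ k)"
        using Suc 0 b0 by (simp add: fun_eq_iff algebra_simps)
      have i1: "integrable (mu q) (\<lambda>x. x ^ Suc k)" by (rule mu_int_power(1)[OF q0 q1])
      have i2: "integrable (mu q) (\<lambda>x. q * x ^ k)" by (rule integrable_mult_right, rule mu_int_power(1)[OF q0 q1])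
      have "Tq n k = (\<integral>x. x ^ Suc k \<partial>mu q) - q * (\<integral>x. x ^ k \<partial>mu q)"
        unfolding Tq_def e Bochner_Integration.integral_diff[OF i1 i2] by simp
      also have "\<dots> = q * qfact q (Suc k) - q * ((1 - q) * 0 ^ k + q * qfact q k)"
        by (simp only: mu_int_power(2)[OF q0 q1]) simp
      also have "\<dots> = Gf q n k + (if k = 0 then (1 - q) * poly (opoly q n) 0 else 0)"
        using Suc 0 b0 q1 \<open>q \<noteq> 1\<close>
        by (simp add: Gf_def Cq_def Rq_def qfact_Suc field_simps power2_eq_square power_0_left)
      finally show ?thesis .
    next
      case (Suc r)
      have nn: "n = Suc (Suc r)" using Suc \<open>n = Suc m\<close> by simp
      have IH1: "Tq (Suc r) k' = Gf q (Suc r) k' + (if k' = 0 then (1 - q) * poly (opoly q (Suc r)) 0 else 0)" for k'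
        using 1 nn by simp
      have IH0: "Tq r k' = Gf q r k' + (if k' = 0 then (1 - q) * poly (opoly q r) 0 else 0)" for k'
        using 1 nn by simp
      define b where "b = bcoef q (Suc r)"
      define l where "l = lcoef q (Suc r)"
      have e: "(\<lambda>x. x ^ k * poly (opoly q n) x) = (\<lambda>x. x ^ Suc k * poly (opoly q (Suc r)) x
          - b * (x ^ k * poly (opoly q (Suc r)) x) - l * (x ^ k * poly (opoly q r) x))"
        using nn by (simp add: fun_eq_iff algebra_simps b_def l_def)
      have "Tq n k = Tq (Suc r) (Suc k) - b * Tq (Suc r) k - l * Tq r k"
      proof -
        have j1: "integrable (mu q) (\<lambda>x. x ^ Suc k * poly (opoly q (Suc r)) x)" by (rule int_xpoly)
        have j2: "integrable (mu q) (\<lambda>x. b * (x ^ k * poly (opoly q (Suc r)) x))"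
          by (rule integrable_mult_right, rule int_xpoly)
        have j3: "integrable (mu q) (\<lambda>x. l * (x ^ k * poly (opoly q r) x))"
          by (rule integrable_mult_right, rule int_xpoly)
        note j12 = Bochner_Integration.integrable_diff[OF j1 j2]
        show ?thesis
          unfolding Tq_def e Bochner_Integration.integral_diff[OF j12 j3]
            Bochner_Integration.integral_diff[OF j1 j2] integral_mult_right_zero ..
      qed
      also have "\<dots> = Gf q n k + (if k = 0 then (1 - q) * poly (opoly q n) 0 else 0)"
        unfolding IH1 IH0 nn G_rec[OF q1] b_def l_def
        by (simp add: algebra_simps)
      finally show ?thesis .
    qed
  qed
qed

lemma T_zero: assumes "k < n" shows "Tq n k = 0"
proof -
  obtain m where n: "n = Suc m" using assms by (cases n) auto
  show ?thesis
  proof (cases k)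
    case (Suc k')
    have "Rq q n k = 0" unfolding Rq_def
      by (rule prod_zero) (use assms Suc in \<open>auto intro!: bexI[of _ k]\<close>)
    then show ?thesis using Suc n by (simp add: T_formula Gf_def)
  next
    case 0
    define P where "P = (\<Prod>j=1..m. - (q ^ j * qint q j))"
    have p0: "poly (opoly q n) 0 = P * (- (q ^ n * qint q n))"
      unfolding poly0 P_def n by (simp add: prod.nat_ivl_Suc')
    have R: "Rq q n 0 = (\<Prod>j=1..m. q ^ j - 1)" by (simp add: Rq_def n atLeastLessThanSuc_atLeastAtMost)
    have "q \<noteq> 1" using \<open>q < 1\<close> by linarith
    have "P = (\<Prod>j=1..m. (q ^ j / (1 - q)) * (q ^ j - 1))"
      unfolding P_def qint_def by (rule prod.cong) (use \<open>q \<noteq> 1\<close> in \<open>auto simp: field_simps\<close>)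
    then have PR: "P = Cq q m * Rq q n 0" by (simp only: R Cq_def prod.distrib[symmetric])
    have C: "Cq q n = Cq q m * (q ^ n / (1 - q))" unfolding n by (rule Cq_Suc)
    have "n \<noteq> 0" using n by simp
    show ?thesis using 0 \<open>q \<noteq> 1\<close> \<open>n \<noteq> 0\<close>
      unfolding T_formula Gf_def p0 PR C
      by (simp add: qint_def field_simps qfact_def)
  qed
qed

end



lemma orth_lt:
  fixes q :: real assumes q0: "0 < q" and q1: "q < 1" and mn: "m < n"
  shows "(\<integral>x. poly (opoly q m) x * poly (opoly q n) x \<partial>mu q) = 0"
proof -
  define p where "p = opoly q m"
  have e: "(\<lambda>x. poly p x * poly (opoly q n) x) = (\<lambda>x. \<Sum>i\<le>degree p. coeff p i * (x ^ i * poly (opoly q n) x))"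
    by (simp add: fun_eq_iff poly_altdef sum_distrib_right mult_ac)
  have "(\<integral>x. poly p x * poly (opoly q n) x \<partial>mu q) = (\<Sum>i\<le>degree p. \<integral>x. coeff p i * (x ^ i * poly (opoly q n) x) \<partial>mu q)"
    unfolding e by (rule Bochner_Integration.integral_sum) (intro integrable_mult_right int_xpoly[OF q0 q1])
  also have "\<dots> = (\<Sum>i\<le>degree p. coeff p i * Tq q n i)"
    by (simp add: Tq_def[OF q0 q1])
  also have "\<dots> = 0"
  proof (rule sum.neutral, rule ballI)
    fix i assume "i \<in> {..degree p}"
    then have "i < n" using deg_opoly[OF q0 q1, of m] mn unfolding p_def by simp
    then show "coeff p i * Tq q n i = 0" using T_zero[OF q0 q1] by simp
  qed
  finally show ?thesis unfolding p_def .
qed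

theorem proposition1:
  fixes q :: real
  assumes "0 < q" and "q < 1"
  shows "prob_space (mu q)
    \<and> (\<forall>m n. integrable (mu q) (\<lambda>x. poly (opoly q m) x * poly (opoly q n) x))
    \<and> (\<forall>m n. m \<noteq> n \<longrightarrow>
           (\<integral>x. poly (opoly q m) x * poly (opoly q n) x \<partial>mu q) = 0)
    \<and> (\<forall>n. integrable (mu q) (\<lambda>x. x ^ n))
    \<and> (\<integral>x. x ^ 0 \<partial>mu q) = 1
    \<and> (\<forall>n\<ge>1. (\<integral>x. x ^ n \<partial>mu q) = q * qfact q n)"
proof (intro conjI allI impI)
  show "prob_space (mu q)" by (rule mu_prob[OF assms])
next
  fix m n
  have "(\<lambda>x. poly (opoly q m) x * poly (opoly q n) x) = (\<lambda>x. poly (opoly q m * opoly q n) x)"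
    by (simp add: fun_eq_iff)
  then show "integrable (mu q) (\<lambda>x. poly (opoly q m) x * poly (opoly q n) x)"
    using int_poly[OF assms, of "opoly q m * opoly q n"] by simp
next
  fix m n :: nat assume "m \<noteq> n"
  then show "(\<integral>x. poly (opoly q m) x * poly (opoly q n) x \<partial>mu q) = 0"
  proof (cases "m < n")
    case True then show ?thesis by (rule orth_lt[OF assms])
  next
    case False
    then have "n < m" using \<open>m \<noteq> n\<close> by simp
    from orth_lt[OF assms this] show ?thesis by (simp add: mult.commute)
  qed
next
  fix n show "integrable (mu q) (\<lambda>x. x ^ n)" by (rule mu_int_power(1)[OF assms])
next
  show "(\<integral>x. x ^ 0 \<partial>mu q) = 1" using mu_int_power(2)[OF assms, of 0] by (simp add: qfact_def)
next
  fix n :: nat assume "n \<ge> 1"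
  then show "(\<integral>x. x ^ n \<partial>mu q) = q * qfact q n" using mu_int_power(2)[OF assms, of n] by simp
qed


end
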